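(* Let $X$ be a complex Banach space. For every $1\leq p\leq\infty$, $d^{\widehat{\mathcal{B}}}_p$ is a Bloch reasonable crossnorm on $\mathrm{lin}(\Gamma(\mathbb{D}))\otimes X$.
   Context: $\mathbb{D}=\{z\in\mathbb{C}:|z|<1\}$. $\widehat{\mathcal{B}}(\mathbb{D},Y)$ (for a complex Banach space $Y$) is the Banach space of holomorphic $f:\mathbb{D}\to Y$ with $f(0)=0$ and $p_{\mathcal{B}}(f)=\sup_{z\in\mathbb{D}}(1-|z|^2)\|f'(z)\|<\infty$, normed by $p_{\mathcal{B}}$; $\widehat{\mathcal{B}}(\mathbb{D})=\widehat{\mathcal{B}}(\mathbb{D},\mathbb{C})$ with closed unit ball $B_{\widehat{\mathcal{B}}(\mathbb{D})}$. For $z\in\mathbb{D}$, $\gamma_z\in\widehat{\mathcal{B}}(\mathbb{D})^*$ is $\gamma_z(g)=g'(z)$ (it has norm $1/(1-|z|^2)$). For $x\in X$, $\gamma_z\otimes x$ is the functional on $\widehat{\mathcal{B}}(\mathbb{D},X^* )$ given by $(\gamma_z\otimes x)(f)=\langle f'(z),x\rangle$, and $\mathrm{lin}(\Gamma(\mathbb{D}))\otimes X$ is the linear span of all $\gamma_z\otimes x$ in $\widehat{\mathcal{B}}(\mathbb{D},X^* )^*$, with elements written $\sum_{i=1}^n\lambda_i\gamma_{z_i}\otimes x_i$. Let $p^*$ be the conjugate index ($1^*=\infty$, $\infty^*=1$, $p^*=p/(p-1)$ otherwise). For $\gamma$ in this space, with infima over all representations $\gamma=\sum_{i=1}^n\lambda_i\gamma_{z_i}\otimes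 x_i$: $d^{\widehat{\mathcal{B}}}_1(\gamma)=\inf\left(\sup_{g\in B_{\widehat{\mathcal{B}}(\mathbb{D})}}\max_{i}|\lambda_i||g'(z_i)|\right)\left(\sum_i\|x_i\|\right)$; for $1<p<\infty$, $d^{\widehat{\mathcal{B}}}_p(\gamma)=\inf\left(\sup_{g\in B_{\widehat{\mathcal{B}}(\mathbb{D})}}\left(\sum_i|\lambda_i|^{p^*}|g'(z_i)|^{p^*}\right)^{1/p^*}\right)\left(\sum_i\|x_i\|^p\right)^{1/p}$; $d^{\widehat{\mathcal{B}}}_\infty(\gamma)=\inf\left(\sup_{g\in B_{\widehat{\mathcal{B}}(\mathbb{D})}}\sum_i|\lambda_i||g'(z_i)|\right)\left(\max_i\|x_i\|\right)$. A norm $\alpha$ on $\mathrm{lin}(\Gamma(\mathbb{D}))\otimes X$ is a Bloch reasonable crossnorm if (1) $\alpha(\gamma_z\otimes x)\leq\|\gamma_z\|\|x\|$ for all $z\in\mathbb{D}$, $x\in X$, and (2) for every $g\in\widehat{\mathcal{B}}(\mathbb{D})$ and $x^*\in X^*$, the linear functional $g\otimes x^*$ on $\mathrm{lin}(\Gamma(\mathbb{D}))\otimes X$ determined by $(g\otimes x^* )(\gamma_z\otimes x)=g'(z)x^*(x)$ is bounded (with respect to $\alpha$) with norm at most $p_{\mathcal{B}}(g)\|x^*\|$. *)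

theory Defs
  imports "HOL-Analysis.Analysis"
begin

class complex_banach = banach +
  fixes scaleC :: "complex \<Rightarrow> 'a \<Rightarrow> 'a"
  assumes scaleC_add_right: "scaleC c (x + y) = scaleC c x + scaleC c y"
      and scaleC_add_left: "scaleC (b + c) x = scaleC b x + scaleC c x"
      and scaleC_scaleC: "scaleC b (scaleC c x) = scaleC (b * c) x"
      and scaleC_one: "scaleC 1 x = x"
      and scaleC_of_real: "scaleC (complex_of_real r) x = r *\<^sub>R x"
      and norm_scaleC: "norm (scaleC c x) = cmod c * norm x"

definition cdual :: "('a::complex_banach \<Rightarrow> complex) set" where
  "cdual = {\<phi>. (\<forall>x y. \<phi> (x + y) = \<phi> x + \<phi> y) \<and>
               (\<forall>c x. \<phi> (scaleC c x) = c * \<phi> x) \<and>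
               (\<exists>K. \<forall>x. cmod (\<phi> x) \<le> K * norm x)}"

definition dnorm :: "('a::complex_banach \<Rightarrow> complex) \<Rightarrow> real" where
  "dnorm \<phi> = Sup {cmod (\<phi> x) | x. norm x \<le> 1}"

abbreviation disc :: "complex set" where "disc \<equiv> ball 0 1"

definition has_dual_deriv ::
  "(complex \<Rightarrow> 'a::complex_banach \<Rightarrow> complex) \<Rightarrow> ('a \<Rightarrow> complex) \<Rightarrow> complex \<Rightarrow> bool" where
  "has_dual_deriv F F' z \<longleftrightarrow> F' \<in> cdual \<and>
     ((\<lambda>w. dnorm (\<lambda>x. (F w x - F z x) / (w - z) - F' x)) \<longlongrightarrow> 0) (at z)"

definition dual_deriv :: "(complex \<Rightarrow> 'a::complex_banach \<Rightarrow> complex) \<Rightarrow> complex \<Rightarrow> 'a \<Rightarrow> complex" where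
  "dual_deriv F z = (SOME F'. has_dual_deriv F F' z)"

definition bloch_dual :: "(complex \<Rightarrow> 'a::complex_banach \<Rightarrow> complex) set" where
  "bloch_dual = {F. (\<forall>z\<in>disc. F z \<in> cdual) \<and> (\<forall>z\<in>disc. \<exists>F'. has_dual_deriv F F' z) \<and>
       F 0 = (\<lambda>x. 0) \<and>
       bdd_above ((\<lambda>z. (1 - (cmod z)\<^sup>2) * dnorm (dual_deriv F z)) ` disc)}"

definition bloch_norm :: "(complex \<Rightarrow> complex) \<Rightarrow> real" where
  "bloch_norm g = (SUP z\<in>disc. (1 - (cmod z)\<^sup>2) * cmod (deriv g z))"

definition bloch :: "(complex \<Rightarrow> complex) set" where
  "bloch = {g. g holomorphic_on disc \<and> g 0 = 0 \<and>
               bdd_above ((\<lambda>z. (1 - (cmod z)\<^sup>2) * cmod (deriv g z)) ` disc)}"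

definition bloch_ball :: "(complex \<Rightarrow> complex) set" where
  "bloch_ball = {g \<in> bloch. bloch_norm g \<le> 1}"

text \<open>Norm of the evaluation functional gamma_z (g |-> g'(z)) in the dual of the Bloch space.\<close>

definition gamma_norm :: "complex \<Rightarrow> real" where
  "gamma_norm z = (SUP g\<in>bloch_ball. cmod (deriv g z))"

text \<open>A representation sum_i lambda_i gamma_{z_i} (x) x_i is a list of triples (lambda_i, z_i, x_i)
with all z_i in D. Its associated functional on the vector-valued Bloch space
(taken to be 0 outside that space) is f |-> sum_i lambda_i <f'(z_i), x_i>.\<close>

definition valid_rep :: "(complex \<times> complex \<times> 'a) list \<Rightarrow> bool" where
  "valid_rep r \<longleftrightarrow> (\<forall>(l, z, x) \<in> set r. z \<in> disc)"

definition tens :: "(complex \<times> complex \<times> 'a::complex_banach) list \<Rightarrow>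
                    (complex \<Rightarrow> 'a \<Rightarrow> complex) \<Rightarrow> complex" where
  "tens r = (\<lambda>F. if F \<in> bloch_dual
                 then (\<Sum>(l, z, x)\<leftarrow>r. l * dual_deriv F z x) else 0)"

definition tensor_space :: "((complex \<Rightarrow> 'a::complex_banach \<Rightarrow> complex) \<Rightarrow> complex) set" where
  "tensor_space = {tens r | r. valid_rep r}"

definition lp_norm :: "ereal \<Rightarrow> real list \<Rightarrow> real" where
  "lp_norm p xs = (if p = \<infinity> then Max (insert 0 (set (map abs xs)))
                   else (\<Sum>t\<leftarrow>xs. \<bar>t\<bar> powr real_of_ereal p) powr (1 / real_of_ereal p))"

definition conj_idx :: "ereal \<Rightarrow> ereal" where
  "conj_idx p = (if p = 1 then \<infinity> else if p = \<infinity> then 1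
                 else ereal (real_of_ereal p / (real_of_ereal p - 1)))"

definition d_bloch :: "ereal \<Rightarrow> ((complex \<Rightarrow> 'a::complex_banach \<Rightarrow> complex) \<Rightarrow> complex) \<Rightarrow> real" where
  "d_bloch p \<gamma> = Inf {(SUP g\<in>bloch_ball.
                          lp_norm (conj_idx p) (map (\<lambda>(l, z, x). cmod l * cmod (deriv g z)) r))
                       * lp_norm p (map (\<lambda>(l, z, x). norm x) r)
                     | r. valid_rep r \<and> tens r = \<gamma>}"

definition is_norm_on :: "((complex \<Rightarrow> 'a::complex_banach \<Rightarrow> complex) \<Rightarrow> complex) set \<Rightarrow>
                          (((complex \<Rightarrow> 'a \<Rightarrow> complex) \<Rightarrow> complex) \<Rightarrow> real) \<Rightarrow> bool" where
  "is_norm_on V \<alpha> \<longleftrightarrow>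
     (\<forall>\<gamma>\<in>V. 0 \<le> \<alpha> \<gamma>) \<and>
     (\<forall>\<gamma>\<in>V. \<alpha> \<gamma> = 0 \<longleftrightarrow> \<gamma> = (\<lambda>F. 0)) \<and>
     (\<forall>\<gamma>\<in>V. \<forall>c. \<alpha> (\<lambda>F. c * \<gamma> F) = cmod c * \<alpha> \<gamma>) \<and>
     (\<forall>\<gamma>\<in>V. \<forall>\<delta>\<in>V. \<alpha> (\<lambda>F. \<gamma> F + \<delta> F) \<le> \<alpha> \<gamma> + \<alpha> \<delta>)"

text \<open>(1): alpha(gamma_z (x) x) <= ||gamma_z|| ||x||;
(2): for g in the Bloch space and x* in X*, the functional g (x) x*, given on
sum_i lambda_i gamma_{z_i} (x) x_i by sum_i lambda_i g'(z_i) x*(x_i), is bounded by p_B(g) ||x*||.\<close>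

definition bloch_reasonable_crossnorm ::
  "(((complex \<Rightarrow> 'a::complex_banach \<Rightarrow> complex) \<Rightarrow> complex) \<Rightarrow> real) \<Rightarrow> bool" where
  "bloch_reasonable_crossnorm \<alpha> \<longleftrightarrow>
     is_norm_on tensor_space \<alpha> \<and>
     (\<forall>z\<in>disc. \<forall>x. \<alpha> (tens [(1, z, x)]) \<le> gamma_norm z * norm x) \<and>
     (\<forall>g\<in>bloch. \<forall>xs\<in>cdual. \<forall>r. valid_rep r \<longrightarrow>
        cmod (\<Sum>(l, z, x)\<leftarrow>r. l * deriv g z * xs x) \<le> bloch_norm g * dnorm xs * \<alpha> (tens r))"

end

theory Submission
  imports Defs "HOL-Computational_Algebra.Polynomial"
begin

lemma lp_fin: "lp_norm (ereal Q) xs = (\<Sum>t\<leftarrow>xs. \<bar>t\<bar> powr Q) powr (1 / Q)"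
  by (simp add: lp_norm_def)

lemma lp_inf: "lp_norm \<infinity> xs = Max (insert 0 (abs ` set xs))"
  by (simp add: lp_norm_def)

lemma ereal_ge1_cases:
  assumes "1 \<le> (p::ereal)"
  obtains "p = \<infinity>" | P where "p = ereal P" "1 \<le> P"
  using assms by (cases p) auto

lemma lp_nonneg: "0 \<le> lp_norm q xs"
proof (cases "q = \<infinity>")
  case True
  then show ?thesis by (simp add: lp_inf)
next
  case False
  then show ?thesis by (simp add: lp_norm_def)
qed

lemma lp_single: assumes "1 \<le> q" shows "lp_norm q [t] = \<bar>t\<bar>"
  using assms
proof (cases rule: ereal_ge1_cases)
  case 1 then show ?thesis by (simp add: lp_inf)
next
  case (2 P)
  then show ?thesis by (simp add: lp_fin powr_powr)
qed

lemma lp_mono: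
  assumes "1 \<le> q" "\<And>i. i \<in> set r \<Longrightarrow> \<bar>f i\<bar> \<le> \<bar>g i\<bar>"
  shows "lp_norm q (map f r) \<le> lp_norm q (map g r)"
  using assms(1)
proof (cases rule: ereal_ge1_cases)
  case 1
  have "Max (insert 0 (abs ` set (map f r))) \<le> Max (insert 0 (abs ` set (map g r)))"
  proof (subst Max_le_iff, simp, simp, intro ballI)
    fix a assume "a \<in> insert 0 (abs ` set (map f r))"
    then show "a \<le> Max (insert 0 (abs ` set (map g r)))"
    proof
      assume "a = 0" then show ?thesis by (simp add: Max_ge_iff)
    next
      assume "a \<in> abs ` set (map f r)"
      then obtain i where "i \<in> set r" "a = \<bar>f i\<bar>" by auto
      then show ?thesis using assms(2)[of i] by (auto simp add: Max_ge_iff)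
    qed
  qed
  then show ?thesis using 1 by (simp add: lp_inf)
next
  case (2 P)
  have "(\<Sum>t\<leftarrow>map f r. \<bar>t\<bar> powr P) \<le> (\<Sum>t\<leftarrow>map g r. \<bar>t\<bar> powr P)"
    using assms(2) 2 by (simp add: sum_list_mono powr_mono2 o_def)
  moreover have "0 \<le> (\<Sum>t\<leftarrow>map f r. \<bar>t\<bar> powr P)"
    by (rule sum_list_nonneg) auto
  ultimately show ?thesis using 2
    unfolding 2(1) lp_fin by (intro powr_mono2) auto
qed

lemma lp_hom:
  assumes "1 \<le> q" "0 \<le> t"
  shows "lp_norm q (map (\<lambda>i. t * f i) r) = t * lp_norm q (map f r)"
  using assms(1)
proof (cases rule: ereal_ge1_cases)
  case 1
  have e: "abs ` set (map (\<lambda>i. t * f i) r) = (\<lambda>y. t * y) ` abs ` set (map f r)"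
    using assms(2) by (auto simp add: image_image abs_mult)
  have "insert 0 ((\<lambda>y. t * y) ` abs ` set (map f r)) = (\<lambda>y. t * y) ` insert 0 (abs ` set (map f r))"
    by simp
  moreover have "Max ((\<lambda>y. t * y) ` insert 0 (abs ` set (map f r))) = t * Max (insert 0 (abs ` set (map f r)))"
    by (rule mono_Max_commute[symmetric]) (auto simp add: mono_def assms(2) mult_left_mono)
  ultimately show ?thesis using 1 e by (simp add: lp_inf del: set_map)
next
  case (2 P)
  have "(\<Sum>x\<leftarrow>r. \<bar>t * f x\<bar> powr P) = (\<Sum>x\<leftarrow>r. t powr P * \<bar>f x\<bar> powr P)"
    using assms(2) by (simp add: abs_mult powr_mult)
  also have "\<dots> = t powr P * (\<Sum>x\<leftarrow>r. \<bar>f x\<bar> powr P)"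
    by (simp add: sum_list_const_mult)
  finally have e: "(\<Sum>x\<leftarrow>r. \<bar>t * f x\<bar> powr P) = t powr P * (\<Sum>x\<leftarrow>r. \<bar>f x\<bar> powr P)" .
  have nn: "0 \<le> (\<Sum>x\<leftarrow>r. \<bar>f x\<bar> powr P)" by (rule sum_list_nonneg) auto
  have "(t powr P * (\<Sum>x\<leftarrow>r. \<bar>f x\<bar> powr P)) powr (1/P) = (t powr P) powr (1/P) * (\<Sum>x\<leftarrow>r. \<bar>f x\<bar> powr P) powr (1/P)"
    using nn by (simp add: powr_mult)
  also have "(t powr P) powr (1/P) = t" using 2 assms(2) by (simp add: powr_powr)
  finally show ?thesis using 2 e by (simp add: lp_fin o_def)
qed

lemma lp_append:
  assumes "1 \<le> q"
  shows "lp_norm q (xs @ ys) = lp_norm q [lp_norm q xs, lp_norm q ys]"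
  using assms(1)
proof (cases rule: ereal_ge1_cases)
  case 1
  define MA where "MA = Max (insert 0 (abs ` set xs))"
  define MB where "MB = Max (insert 0 (abs ` set ys))"
  have "MA \<ge> 0" "MB \<ge> 0" unfolding MA_def MB_def by (auto simp add: Max_ge_iff)
  have "Max (insert 0 (abs ` set (xs @ ys))) = Max (insert 0 (abs ` set xs) \<union> insert 0 (abs ` set ys))"
    by (simp add: image_Un insert_absorb)
  also have "\<dots> = max MA MB" unfolding MA_def MB_def by (rule Max_Un) auto
  finally show ?thesis using 1 \<open>MA \<ge> 0\<close> \<open>MB \<ge> 0\<close>
    by (simp add: lp_inf MA_def[symmetric] MB_def[symmetric] max_def)
next
  case (2 P)
  have n1: "0 \<le> (\<Sum>t\<leftarrow>xs. \<bar>t\<bar> powr P)" by (rule sum_list_nonneg) auto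
  have n2: "0 \<le> (\<Sum>t\<leftarrow>ys. \<bar>t\<bar> powr P)" by (rule sum_list_nonneg) auto
  show ?thesis using 2 n1 n2 by (simp add: lp_fin powr_powr)
qed

definition wexp :: "ereal \<Rightarrow> real" where
  "wexp q = (if q = \<infinity> then 0 else 1 / real_of_ereal q)"

lemma lp_two_pow:
  assumes "1 \<le> q" "0 < D1" "0 < D2"
  shows "lp_norm q [D1 powr wexp q, D2 powr wexp q] = (D1 + D2) powr wexp q"
  using assms(1)
proof (cases rule: ereal_ge1_cases)
  case 1
  then show ?thesis using assms by (simp add: lp_inf wexp_def)
next
  case (2 P)
  then show ?thesis using assms by (simp add: lp_fin wexp_def powr_powr)
qed

lemma conj_ge1: assumes "1 \<le> p" shows "1 \<le> conj_idx p"
  using assms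
proof (cases rule: ereal_ge1_cases)
  case 1 then show ?thesis by (simp add: conj_idx_def)
next
  case (2 P)
  then show ?thesis by (auto simp add: conj_idx_def field_simps)
qed

lemma wexp_sum: assumes "1 \<le> p" shows "wexp p + wexp (conj_idx p) = 1"
  using assms
proof (cases rule: ereal_ge1_cases)
  case 1 then show ?thesis by (simp add: conj_idx_def wexp_def)
next
  case (2 P)
  then show ?thesis by (auto simp add: conj_idx_def wexp_def field_simps one_ereal_def)
qed

lemma lp_one: assumes "\<forall>i\<in>set r. 0 \<le> f i" shows "lp_norm 1 (map f r) = (\<Sum>i\<leftarrow>r. f i)"
proof -
  have "(\<Sum>t\<leftarrow>map f r. \<bar>t\<bar> powr 1) = (\<Sum>i\<leftarrow>r. f i)"
    using assms by (simp add: o_def cong: map_cong)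
  moreover have "0 \<le> (\<Sum>i\<leftarrow>r. f i)" using assms by (intro sum_list_nonneg) auto
  ultimately show ?thesis using lp_fin[of 1 "map f r"] by (simp add: one_ereal_def)
qed

lemma lp_inf_ge: "i \<in> set r \<Longrightarrow> \<bar>f i\<bar> \<le> lp_norm \<infinity> (map f r)"
  by (auto simp add: lp_inf Max_ge_iff)

lemma holder_fin:
  fixes P Q :: real
  assumes "1 < P" "1 < Q" "1/P + 1/Q = 1" "\<forall>i\<in>set r. 0 \<le> f i" "\<forall>i\<in>set r. 0 \<le> g i"
  shows "(\<Sum>i\<leftarrow>r. f i * g i) \<le> lp_norm (ereal Q) (map f r) * lp_norm (ereal P) (map g r)"
proof -
  define Sf where "Sf = (\<Sum>i\<leftarrow>r. f i powr Q)"
  define Sg where "Sg = (\<Sum>i\<leftarrow>r. g i powr P)"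
  have lf: "lp_norm (ereal Q) (map f r) = Sf powr (1/Q)"
    unfolding lp_fin Sf_def using assms(4) by (simp add: o_def cong: map_cong)
  have lg: "lp_norm (ereal P) (map g r) = Sg powr (1/P)"
    unfolding lp_fin Sg_def using assms(5) by (simp add: o_def cong: map_cong)
  have Sf0: "0 \<le> Sf" unfolding Sf_def by (rule sum_list_nonneg) auto
  have Sg0: "0 \<le> Sg" unfolding Sg_def by (rule sum_list_nonneg) auto
  show ?thesis
  proof (cases "Sf = 0 \<or> Sg = 0")
    case True
    then have "\<forall>i\<in>set r. f i = 0 \<or> g i = 0"
    proof
      assume "Sf = 0"
      then have "\<forall>x\<in>set (map (\<lambda>i. f i powr Q) r). x = 0"
        unfolding Sf_def by (subst sum_list_nonneg_eq_0_iff[symmetric]) auto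
      then show ?thesis using assms by auto
    next
      assume "Sg = 0"
      then have "\<forall>x\<in>set (map (\<lambda>i. g i powr P) r). x = 0"
        unfolding Sg_def by (subst sum_list_nonneg_eq_0_iff[symmetric]) auto
      then show ?thesis using assms by auto
    qed
    then have "(\<Sum>i\<leftarrow>r. f i * g i) = (\<Sum>i\<leftarrow>r. 0)"
      by (intro arg_cong[where f=sum_list] map_cong) auto
    then show ?thesis using lp_nonneg by (simp add: lf lg)
  next
    case False
    then have pf: "0 < Sf" and pg: "0 < Sg" using Sf0 Sg0 by auto
    define a where "a = Sf powr (1/Q)"
    define b where "b = Sg powr (1/P)"
    have a0: "0 < a" "a powr Q = Sf" unfolding a_def using pf assms by (auto simp add: powr_powr)
    have b0: "0 < b" "b powr P = Sg" unfolding b_def using pg assms by (auto simp add: powr_powr)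
    have "(\<Sum>i\<leftarrow>r. (f i / a) * (g i / b)) \<le> (\<Sum>i\<leftarrow>r. (f i / a) powr Q / Q + (g i / b) powr P / P)"
    proof (rule sum_list_mono)
      fix i assume "i \<in> set r"
      then show "(f i / a) * (g i / b) \<le> (f i / a) powr Q / Q + (g i / b) powr P / P"
        using Youngs_inequality[of Q P "f i / a" "g i / b"] assms a0 b0 by (auto simp add: add.commute)
    qed
    also have "\<dots> = (\<Sum>i\<leftarrow>r. (1 / (Q * Sf)) * f i powr Q + (1 / (P * Sg)) * g i powr P)"
      using assms a0 b0 by (intro arg_cong[where f=sum_list] map_cong) (auto simp add: powr_divide mult.commute)
    also have "\<dots> = (1 / (Q * Sf)) * Sf + (1 / (P * Sg)) * Sg"
      by (simp only: sum_list_addf sum_list_const_mult Sf_def Sg_def)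
    also have "\<dots> = 1" using pf pg assms(3) by (simp add: add.commute)
    finally have "(\<Sum>i\<leftarrow>r. (1 / (a * b)) * (f i * g i)) \<le> 1"
      by (simp add: mult.commute)
    then have "(1 / (a * b)) * (\<Sum>i\<leftarrow>r. f i * g i) \<le> 1"
      by (simp only: sum_list_const_mult)
    then have "(\<Sum>i\<leftarrow>r. f i * g i) \<le> a * b" using a0 b0 by (simp add: field_simps)
    then show ?thesis by (simp add: lf lg a_def b_def)
  qed
qed

lemma holder:
  assumes "1 \<le> p" "\<forall>i\<in>set r. 0 \<le> f i" "\<forall>i\<in>set r. 0 \<le> g i"
  shows "(\<Sum>i\<leftarrow>r. f i * g i) \<le> lp_norm (conj_idx p) (map f r) * lp_norm p (map g r)"
  using assms(1)
proof (cases rule: ereal_ge1_cases)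
  case 1
  have "(\<Sum>i\<leftarrow>r. f i * g i) \<le> (\<Sum>i\<leftarrow>r. f i * lp_norm \<infinity> (map g r))"
    using assms lp_inf_ge[of _ r g] by (intro sum_list_mono mult_left_mono) auto
  then show ?thesis using 1 assms by (simp add: conj_idx_def lp_one sum_list_mult_const)
next
  case (2 P)
  show ?thesis
  proof (cases "P = 1")
    case True
    have "(\<Sum>i\<leftarrow>r. f i * g i) \<le> (\<Sum>i\<leftarrow>r. lp_norm \<infinity> (map f r) * g i)"
      using assms lp_inf_ge[of _ r f] by (intro sum_list_mono mult_right_mono) auto
    then show ?thesis using 2 True assms by (simp add: conj_idx_def lp_one sum_list_const_mult one_ereal_def[symmetric])
  next
    case False
    then have P1: "1 < P" using 2 by auto
    have "conj_idx p = ereal (P / (P - 1))" using 2 P1 by (auto simp add: conj_idx_def one_ereal_def)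
    moreover have "1 < P / (P - 1)" using P1 by (simp add: field_simps)
    moreover have "1 / P + 1 / (P / (P - 1)) = 1" using P1 by (simp add: field_simps)
    ultimately show ?thesis using holder_fin[of P "P/(P-1)" r f g] P1 assms 2 by simp
  qed
qed

lemma cdual_add: "\<phi> \<in> cdual \<Longrightarrow> \<phi> (x + y) = \<phi> x + \<phi> y"
  by (simp add: cdual_def)

lemma cdual_scaleC: "\<phi> \<in> cdual \<Longrightarrow> \<phi> (scaleC c x) = c * \<phi> x"
  by (simp add: cdual_def)

lemma cdual_zero: "\<phi> \<in> cdual \<Longrightarrow> \<phi> 0 = 0"
  using cdual_add[of \<phi> 0 0] by simp

lemma cdual_bdd:
  assumes "\<phi> \<in> cdual"
  shows "bdd_above {cmod (\<phi> x) | x. norm x \<le> 1}"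
proof -
  obtain K where K: "\<And>x. cmod (\<phi> x) \<le> K * norm x" using assms by (auto simp add: cdual_def)
  have "cmod (\<phi> x) \<le> max K 0" if "norm x \<le> 1" for x
  proof -
    have "K * norm x \<le> max K 0"
      using that by (cases "K \<ge> 0") (auto simp add: mult_left_le mult_nonpos_nonneg)
    then show ?thesis using K[of x] by linarith
  qed
  then show ?thesis by (auto simp add: bdd_above_def)
qed

lemma dnorm_ge: "\<phi> \<in> cdual \<Longrightarrow> norm x \<le> 1 \<Longrightarrow> cmod (\<phi> x) \<le> dnorm \<phi>"
  unfolding dnorm_def by (rule cSup_upper) (auto intro: cdual_bdd)

lemma dnorm_nonneg: "\<phi> \<in> cdual \<Longrightarrow> 0 \<le> dnorm \<phi>"
  using dnorm_ge[of \<phi> 0] cdual_zero[of \<phi>] by simp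

lemma dnorm_le: "(\<And>x. norm x \<le> 1 \<Longrightarrow> cmod (\<phi> x) \<le> M) \<Longrightarrow> dnorm \<phi> \<le> M"
proof -
  assume a: "\<And>x. norm x \<le> 1 \<Longrightarrow> cmod (\<phi> x) \<le> M"
  have "norm (0::'a) \<le> 1" by simp
  then have ne: "{cmod (\<phi> x) |x. norm x \<le> 1} \<noteq> {}" by blast
  show ?thesis unfolding dnorm_def by (rule cSup_least[OF ne]) (use a in auto)
qed

lemma cdual_bound:
  assumes "\<phi> \<in> cdual"
  shows "cmod (\<phi> x) \<le> dnorm \<phi> * norm x"
proof (cases "x = 0")
  case True
  then show ?thesis using assms by (simp add: cdual_zero)
next
  case False
  define y where "y = scaleC (complex_of_real (1 / norm x)) x"
  have ny: "norm y = 1" using False by (simp add: y_def norm_scaleC norm_divide)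
  have "\<phi> y = complex_of_real (1 / norm x) * \<phi> x" using assms by (simp add: y_def cdual_scaleC)
  then have "cmod (\<phi> y) = cmod (\<phi> x) / norm x" by (simp add: norm_mult norm_divide)
  moreover have "cmod (\<phi> y) \<le> dnorm \<phi>" using dnorm_ge[OF assms] ny by simp
  ultimately show ?thesis using False
    by (metis mult.commute mult_right_mono norm_ge_zero nonzero_mult_div_cancel_left norm_eq_zero times_divide_eq_right)
qed

lemma cdual_lin:
  assumes "\<phi> \<in> cdual" "\<psi> \<in> cdual"
  shows "(\<lambda>x. a * \<phi> x + b * \<psi> x) \<in> cdual"
proof -
  obtain K1 where K1: "\<And>x. cmod (\<phi> x) \<le> K1 * norm x" using assms by (auto simp add: cdual_def)
  obtain K2 where K2: "\<And>x. cmod (\<psi> x) \<le> K2 * norm x" using assms by (auto simp add: cdual_def)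
  have "cmod (a * \<phi> x + b * \<psi> x) \<le> (cmod a * K1 + cmod b * K2) * norm x" for x
  proof -
    have "cmod (a * \<phi> x + b * \<psi> x) \<le> cmod a * cmod (\<phi> x) + cmod b * cmod (\<psi> x)"
      by (metis norm_mult norm_triangle_ineq)
    also have "\<dots> \<le> cmod a * (K1 * norm x) + cmod b * (K2 * norm x)"
      by (intro add_mono mult_left_mono K1 K2) auto
    finally show ?thesis by (simp add: algebra_simps)
  qed
  then have "\<exists>K. \<forall>x. cmod (a * \<phi> x + b * \<psi> x) \<le> K * norm x" by blast
  moreover have "\<forall>x y. a * \<phi> (x + y) + b * \<psi> (x + y) = (a * \<phi> x + b * \<psi> x) + (a * \<phi> y + b * \<psi> y)"
    using assms by (simp add: cdual_add algebra_simps)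
  moreover have "\<forall>c x. a * \<phi> (scaleC c x) + b * \<psi> (scaleC c x) = c * (a * \<phi> x + b * \<psi> x)"
    using assms by (simp add: cdual_scaleC algebra_simps)
  ultimately show ?thesis unfolding cdual_def by blast
qed

lemma cdual_smult: "\<phi> \<in> cdual \<Longrightarrow> (\<lambda>x. a * \<phi> x) \<in> cdual"
  using cdual_lin[of \<phi> \<phi> a 0] by simp

lemma dnorm_smult_le: "\<phi> \<in> cdual \<Longrightarrow> dnorm (\<lambda>x. a * \<phi> x) \<le> cmod a * dnorm \<phi>"
proof (rule dnorm_le)
  fix x :: 'a assume "\<phi> \<in> cdual" "norm x \<le> 1"
  then have "cmod (\<phi> x) \<le> dnorm \<phi>" by (rule dnorm_ge)
  then show "cmod (a * \<phi> x) \<le> cmod a * dnorm \<phi>" by (simp add: norm_mult mult_left_mono)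
qed

lemma bloch_bdd: "g \<in> bloch \<Longrightarrow> bdd_above ((\<lambda>z. (1 - (cmod z)\<^sup>2) * cmod (deriv g z)) ` disc)"
  by (simp add: bloch_def)

lemma bloch_le_norm: "g \<in> bloch \<Longrightarrow> z \<in> disc \<Longrightarrow> (1 - (cmod z)\<^sup>2) * cmod (deriv g z) \<le> bloch_norm g"
  unfolding bloch_norm_def by (rule cSUP_upper) (auto intro: bloch_bdd)

lemma bloch_norm_nonneg: "g \<in> bloch \<Longrightarrow> 0 \<le> bloch_norm g"
proof -
  assume "g \<in> bloch"
  then have "cmod (deriv g 0) \<le> bloch_norm g" using bloch_le_norm[of g 0] by simp
  then show ?thesis by (meson norm_ge_zero order_trans)
qed

lemma disc_pos: "z \<in> disc \<Longrightarrow> 0 < 1 - (cmod z)\<^sup>2"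
proof -
  assume "z \<in> disc"
  then have "cmod z < 1" by simp
  then have "(cmod z)\<^sup>2 < 1" by (simp add: power_less_one_iff abs_square_less_1)
  then show ?thesis by simp
qed

lemma ball_deriv: "g \<in> bloch_ball \<Longrightarrow> z \<in> disc \<Longrightarrow> cmod (deriv g z) \<le> 1 / (1 - (cmod z)\<^sup>2)"
proof -
  assume g: "g \<in> bloch_ball" and z: "z \<in> disc"
  then have "(1 - (cmod z)\<^sup>2) * cmod (deriv g z) \<le> 1"
    using bloch_le_norm[of g z] by (auto simp add: bloch_ball_def)
  then show ?thesis using disc_pos[OF z] by (simp add: field_simps)
qed

lemma zero_ball: "(\<lambda>z. 0) \<in> bloch_ball"
proof -
  have "bdd_above ((\<lambda>x::complex. 0::real) ` disc)" by (rule bdd_aboveI2[where M=0]) auto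
  then show ?thesis by (simp add: bloch_ball_def bloch_def bloch_norm_def)
qed

lemma bloch_has_deriv: "g \<in> bloch \<Longrightarrow> z \<in> disc \<Longrightarrow> (g has_field_derivative deriv g z) (at z)"
  by (rule holomorphic_derivI[of g disc]) (auto simp add: bloch_def)

section \<open>The vector-valued map g(.) x*\<close>

lemma Fgx_has:
  assumes g: "g \<in> bloch" and xs: "xs \<in> cdual" and z: "z \<in> disc"
  shows "has_dual_deriv (\<lambda>w x. g w * xs x) (\<lambda>x. deriv g z * xs x) z"
proof -
  define c where "c w = (g w - g z) / (w - z) - deriv g z" for w
  have "((\<lambda>w. (g w - g z) / (w - z)) \<longlongrightarrow> deriv g z) (at z)"
    using bloch_has_deriv[OF g z] by (simp add: has_field_derivative_iff)
  then have c0: "(c \<longlongrightarrow> 0) (at z)" unfolding c_def by (rule LIM_zero)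
  have eq: "(\<lambda>x. (g w * xs x - g z * xs x) / (w - z) - deriv g z * xs x) = (\<lambda>x. c w * xs x)" for w
    by (simp add: c_def fun_eq_iff left_diff_distrib times_divide_eq_left)
  have "((\<lambda>w. dnorm (\<lambda>x. c w * xs x)) \<longlongrightarrow> 0) (at z)"
  proof (rule Lim_null_comparison)
    show "\<forall>\<^sub>F w in at z. norm (dnorm (\<lambda>x. c w * xs x)) \<le> cmod (c w) * dnorm xs"
      using dnorm_nonneg[OF cdual_smult[OF xs]] dnorm_smult_le[OF xs] by simp
    show "((\<lambda>w. cmod (c w) * dnorm xs) \<longlongrightarrow> 0) (at z)"
      by (rule tendsto_mult_left_zero) (use c0 tendsto_norm_zero in blast)
  qed
  then show ?thesis unfolding has_dual_deriv_def eq using cdual_smult[OF xs] by simp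
qed

lemma dual_deriv_has:
  assumes "F \<in> bloch_dual" "z \<in> disc"
  shows "has_dual_deriv F (dual_deriv F z) z"
proof -
  from assms obtain F' where "has_dual_deriv F F' z" unfolding bloch_dual_def by blast
  then show ?thesis unfolding dual_deriv_def by (rule someI[of "\<lambda>F'. has_dual_deriv F F' z"])
qed

lemma dual_deriv_cdual:
  assumes "F \<in> bloch_dual" "z \<in> disc" shows "dual_deriv F z \<in> cdual"
  using dual_deriv_has[OF assms] unfolding has_dual_deriv_def by blast

lemma Fgx_dd:
  assumes g: "g \<in> bloch" and xs: "xs \<in> cdual" and z: "z \<in> disc"
  shows "dual_deriv (\<lambda>w x. g w * xs x) z = (\<lambda>x. deriv g z * xs x)"
proof
  fix x
  define F where "F = (\<lambda>w x. g w * xs x)"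
  define H where "H = dual_deriv F z"
  have "has_dual_deriv F H z"
    unfolding H_def dual_deriv_def using Fgx_has[OF assms] unfolding F_def
    by (rule someI[of "\<lambda>F'. has_dual_deriv (\<lambda>w x. g w * xs x) F' z"])
  then have Hc: "H \<in> cdual" and lim: "((\<lambda>w. dnorm (\<lambda>x. (F w x - F z x) / (w - z) - H x)) \<longlongrightarrow> 0) (at z)"
    by (auto simp add: has_dual_deriv_def)
  have e: "(\<lambda>x. (F w x - F z x) / (w - z) - H x) = (\<lambda>x. ((g w - g z) / (w - z)) * xs x + (-1) * H x)" for w
    by (simp add: F_def fun_eq_iff left_diff_distrib times_divide_eq_left)
  have inc: "(\<lambda>x. (F w x - F z x) / (w - z) - H x) \<in> cdual" for w
    unfolding e by (rule cdual_lin[OF xs Hc])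
  have l1: "((\<lambda>w. (F w x - F z x) / (w - z) - H x) \<longlongrightarrow> 0) (at z)"
  proof (rule Lim_null_comparison)
    show "\<forall>\<^sub>F w in at z. norm ((F w x - F z x) / (w - z) - H x) \<le> dnorm (\<lambda>x. (F w x - F z x) / (w - z) - H x) * norm x"
      using cdual_bound[OF inc] by simp
    show "((\<lambda>w. dnorm (\<lambda>x. (F w x - F z x) / (w - z) - H x) * norm x) \<longlongrightarrow> 0) (at z)"
      by (rule tendsto_mult_left_zero[OF lim])
  qed
  have "((\<lambda>w. (g w - g z) / (w - z)) \<longlongrightarrow> deriv g z) (at z)"
    using bloch_has_deriv[OF g z] by (simp add: has_field_derivative_iff)
  then have "((\<lambda>w. ((g w - g z) / (w - z)) * xs x - H x) \<longlongrightarrow> deriv g z * xs x - H x) (at z)"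
    by (intro tendsto_intros)
  moreover have "(\<lambda>w. ((g w - g z) / (w - z)) * xs x - H x) = (\<lambda>w. (F w x - F z x) / (w - z) - H x)"
    by (simp add: F_def fun_eq_iff left_diff_distrib times_divide_eq_left)
  ultimately have "deriv g z * xs x - H x = 0"
    using l1 tendsto_unique[of "at z"] by fastforce
  then show "dual_deriv (\<lambda>w x. g w * xs x) z x = deriv g z * xs x"
    by (simp add: H_def F_def)
qed

lemma Fgx_bloch:
  assumes g: "g \<in> bloch" and xs: "xs \<in> cdual"
  shows "(\<lambda>w x. g w * xs x) \<in> bloch_dual"
proof -
  obtain M where M0: "\<forall>y\<in>(\<lambda>z. (1 - (cmod z)\<^sup>2) * cmod (deriv g z)) ` disc. y \<le> M"
    using bloch_bdd[OF g] unfolding bdd_above_def by blast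
  have M: "\<And>z. z \<in> disc \<Longrightarrow> (1 - (cmod z)\<^sup>2) * cmod (deriv g z) \<le> M"
    using M0 by blast
  have "(1 - (cmod z)\<^sup>2) * dnorm (dual_deriv (\<lambda>w x. g w * xs x) z) \<le> M * dnorm xs" if z: "z \<in> disc" for z
  proof -
    have "(1 - (cmod z)\<^sup>2) * dnorm (dual_deriv (\<lambda>w x. g w * xs x) z) = (1 - (cmod z)\<^sup>2) * dnorm (\<lambda>x. deriv g z * xs x)"
      using Fgx_dd[OF g xs z] by simp
    also have "\<dots> \<le> (1 - (cmod z)\<^sup>2) * (cmod (deriv g z) * dnorm xs)"
      using disc_pos[OF z] dnorm_smult_le[OF xs] by (intro mult_left_mono) auto
    also have "\<dots> \<le> M * dnorm xs"
      using M[OF z] dnorm_nonneg[OF xs] by (simp add: mult.assoc[symmetric] mult_right_mono)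
    finally show ?thesis .
  qed
  then have "bdd_above ((\<lambda>z. (1 - (cmod z)\<^sup>2) * dnorm (dual_deriv (\<lambda>w x. g w * xs x) z)) ` disc)"
    by (intro bdd_aboveI2) auto
  moreover have "g 0 = 0" using g by (simp add: bloch_def)
  moreover have "\<forall>z\<in>disc. \<exists>F'. has_dual_deriv (\<lambda>w x. g w * xs x) F' z"
    using Fgx_has[OF g xs] by blast
  ultimately show ?thesis unfolding bloch_dual_def
    using cdual_smult[OF xs] by auto
qed

lemma tens_eval:
  assumes g: "g \<in> bloch" and xs: "xs \<in> cdual" and r: "valid_rep r"
  shows "tens r (\<lambda>w x. g w * xs x) = (\<Sum>(l, z, x)\<leftarrow>r. l * deriv g z * xs x)"
proof -
  have "(\<Sum>(l, z, x)\<leftarrow>r. l * dual_deriv (\<lambda>w x. g w * xs x) z x) = (\<Sum>(l, z, x)\<leftarrow>r. l * deriv g z * xs x)"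
  proof (intro arg_cong[where f=sum_list] map_cong refl)
    fix y assume "y \<in> set r"
    then show "(case y of (l, z, x) \<Rightarrow> l * dual_deriv (\<lambda>w x. g w * xs x) z x) = (case y of (l, z, x) \<Rightarrow> l * deriv g z * xs x)"
      using r Fgx_dd[OF g xs] by (cases y) (auto simp add: valid_rep_def)
  qed
  then show ?thesis using Fgx_bloch[OF g xs] by (simp add: tens_def)
qed

definition Aq :: "ereal \<Rightarrow> (complex \<times> complex \<times> 'a) list \<Rightarrow> real" where
  "Aq p r = (SUP g\<in>bloch_ball. lp_norm (conj_idx p) (map (\<lambda>(l, z, x). cmod l * cmod (deriv g z)) r))"

definition Bq :: "ereal \<Rightarrow> (complex \<times> complex \<times> 'a::real_normed_vector) list \<Rightarrow> real" where
  "Bq p r = lp_norm p (map (\<lambda>(l, z, x). norm x) r)"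

lemma d_eq: "d_bloch p \<gamma> = Inf {Aq p r * Bq p r | r. valid_rep r \<and> tens r = \<gamma>}"
  by (simp add: d_bloch_def Aq_def Bq_def)

lemma A_bdd:
  assumes p: "1 \<le> p" and r: "valid_rep r"
  shows "bdd_above ((\<lambda>g. lp_norm (conj_idx p) (map (\<lambda>(l, z, x). cmod l * cmod (deriv g z)) r)) ` bloch_ball)"
proof (rule bdd_aboveI2)
  fix g assume g: "g \<in> bloch_ball"
  show "lp_norm (conj_idx p) (map (\<lambda>(l, z, x). cmod l * cmod (deriv g z)) r)
        \<le> lp_norm (conj_idx p) (map (\<lambda>(l, z, x). cmod l * (1 / (1 - (cmod z)\<^sup>2))) r)"
  proof (rule lp_mono[OF conj_ge1[OF p]])
    fix i assume i: "i \<in> set r"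
    obtain l z x where ii: "i = (l, z, x)" by (cases i) auto
    have z: "z \<in> disc" using r i ii by (auto simp add: valid_rep_def)
    have "cmod l * cmod (deriv g z) \<le> cmod l * (1 / (1 - (cmod z)\<^sup>2))"
      using ball_deriv[OF g z] by (intro mult_left_mono) auto
    then show "\<bar>case i of (l, z, x) \<Rightarrow> cmod l * cmod (deriv g z)\<bar> \<le> \<bar>case i of (l, z, x) \<Rightarrow> cmod l * (1 / (1 - (cmod z)\<^sup>2))\<bar>"
      using disc_pos[OF z] by (simp add: ii)
  qed
qed

lemma A_ge:
  assumes "1 \<le> p" "valid_rep r" "g \<in> bloch_ball"
  shows "lp_norm (conj_idx p) (map (\<lambda>(l, z, x). cmod l * cmod (deriv g z)) r) \<le> Aq p r"
  unfolding Aq_def by (rule cSUP_upper[OF assms(3) A_bdd[OF assms(1,2)]])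

lemma A_nonneg: "1 \<le> p \<Longrightarrow> valid_rep r \<Longrightarrow> 0 \<le> Aq p r"
  using A_ge[OF _ _ zero_ball] lp_nonneg by (meson order_trans)

lemma B_nonneg: "0 \<le> Bq p r"
  by (simp add: Bq_def lp_nonneg)

lemma val_nonneg: "1 \<le> p \<Longrightarrow> valid_rep r \<Longrightarrow> 0 \<le> Aq p r * Bq p r"
  by (intro mult_nonneg_nonneg A_nonneg B_nonneg)

lemma d_le:
  assumes "1 \<le> p" "valid_rep r"
  shows "d_bloch p (tens r) \<le> Aq p r * Bq p r"
  unfolding d_eq
proof (rule cInf_lower)
  show "Aq p r * Bq p r \<in> {Aq p r' * Bq p r' | r'. valid_rep r' \<and> tens r' = tens r}"
    using assms by blast
  show "bdd_below {Aq p r' * Bq p r' | r'. valid_rep r' \<and> tens r' = tens r}"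
    unfolding bdd_below_def using val_nonneg[OF assms(1)] by blast
qed

lemma d_ge:
  assumes "1 \<le> p" "valid_rep r0" "tens r0 = \<gamma>"
    and "\<And>r. valid_rep r \<Longrightarrow> tens r = \<gamma> \<Longrightarrow> c \<le> Aq p r * Bq p r"
  shows "c \<le> d_bloch p \<gamma>"
  unfolding d_eq
proof (rule cInf_greatest)
  show "{Aq p r * Bq p r | r. valid_rep r \<and> tens r = \<gamma>} \<noteq> {}" using assms by blast
qed (use assms in blast)

lemma d_nonneg: "1 \<le> p \<Longrightarrow> valid_rep r0 \<Longrightarrow> 0 \<le> d_bloch p (tens r0)"
  by (rule d_ge[of p r0]) (auto intro: val_nonneg)

lemma norm_sum_list_le: "cmod (\<Sum>y\<leftarrow>r. f y) \<le> (\<Sum>y\<leftarrow>r. cmod (f y))"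
proof (induction r)
  case (Cons a r)
  then show ?case using norm_triangle_ineq[of "f a" "\<Sum>y\<leftarrow>r. f y"] by simp
qed simp

lemma scaled_bloch:
  assumes g: "g \<in> bloch" and b: "0 < bloch_norm g"
  defines "h \<equiv> (\<lambda>w. g w / complex_of_real (bloch_norm g))"
  shows "h \<in> bloch_ball" "\<And>z. z \<in> disc \<Longrightarrow> deriv h z = deriv g z / complex_of_real (bloch_norm g)"
proof -
  define b where "b = bloch_norm g"
  show d: "deriv h z = deriv g z / complex_of_real (bloch_norm g)" if z: "z \<in> disc" for z
    unfolding h_def by (rule DERIV_imp_deriv[OF DERIV_cdivide[OF bloch_has_deriv[OF g z]]])
  have hol: "h holomorphic_on disc" unfolding h_def using g
    by (intro holomorphic_intros) (auto simp add: bloch_def)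
  have h0: "h 0 = 0" using g by (simp add: h_def bloch_def)
  have le: "(1 - (cmod z)\<^sup>2) * cmod (deriv h z) \<le> 1" if z: "z \<in> disc" for z
  proof -
    have "(1 - (cmod z)\<^sup>2) * cmod (deriv h z) = ((1 - (cmod z)\<^sup>2) * cmod (deriv g z)) / bloch_norm g"
      using d[OF z] b by (simp add: norm_divide)
    also have "\<dots> \<le> bloch_norm g / bloch_norm g"
      using bloch_le_norm[OF g z] b by (intro divide_right_mono) auto
    finally show ?thesis using b by simp
  qed
  have bd: "bdd_above ((\<lambda>z. (1 - (cmod z)\<^sup>2) * cmod (deriv h z)) ` disc)"
    using le by (intro bdd_aboveI2) auto
  have "bloch_norm h \<le> 1" unfolding bloch_norm_def
    by (rule cSUP_least) (use le in auto)
  then show "h \<in> bloch_ball" using hol h0 bd by (simp add: bloch_ball_def bloch_def)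
qed

lemma basic_bound:
  fixes r :: "(complex \<times> complex \<times> 'a::complex_banach) list"
  assumes p: "1 \<le> p" and g: "g \<in> bloch" and xs: "xs \<in> cdual" and r: "valid_rep r"
  shows "cmod (\<Sum>(l, z, x)\<leftarrow>r. l * deriv g z * xs x) \<le> bloch_norm g * dnorm xs * (Aq p r * Bq p r)"
proof -
  have zr: "\<And>l z x. (l, z, x) \<in> set r \<Longrightarrow> z \<in> disc" using r by (auto simp add: valid_rep_def)
  have s1: "cmod (\<Sum>(l, z, x)\<leftarrow>r. l * deriv g z * xs x) \<le> (\<Sum>(l, z, x)\<leftarrow>r. (cmod l * cmod (deriv g z)) * (dnorm xs * norm x))"
  proof -
    have "cmod (\<Sum>(l, z, x)\<leftarrow>r. l * deriv g z * xs x) \<le> (\<Sum>y\<leftarrow>r. cmod (case y of (l, z, x) \<Rightarrow> l * deriv g z * xs x))"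
      by (rule norm_sum_list_le)
    also have "\<dots> \<le> (\<Sum>(l, z, x)\<leftarrow>r. (cmod l * cmod (deriv g z)) * (dnorm xs * norm x))"
    proof (rule sum_list_mono)
      fix y assume "y \<in> set r"
      obtain l z x where y: "y = (l, z, x)" by (cases y) auto
      have "cmod (l * deriv g z * xs x) = (cmod l * cmod (deriv g z)) * cmod (xs x)" by (simp add: norm_mult)
      also have "\<dots> \<le> (cmod l * cmod (deriv g z)) * (dnorm xs * norm x)"
        using cdual_bound[OF xs] by (intro mult_left_mono) auto
      finally show "cmod (case y of (l, z, x) \<Rightarrow> l * deriv g z * xs x) \<le> (case y of (l, z, x) \<Rightarrow> (cmod l * cmod (deriv g z)) * (dnorm xs * norm x))"
        by (simp add: y)
    qed
    finally show ?thesis .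
  qed
  have bn: "0 \<le> bloch_norm g" by (rule bloch_norm_nonneg[OF g])
  show ?thesis
  proof (cases "bloch_norm g = 0")
    case True
    have "deriv g z = 0" if "z \<in> disc" for z
      using bloch_le_norm[OF g that] True disc_pos[OF that]
      by (metis mult_le_0_iff norm_ge_zero norm_le_zero_iff not_less)
    then have "(\<Sum>(l, z, x)\<leftarrow>r. (cmod l * cmod (deriv g z)) * (dnorm xs * norm x)) = (\<Sum>y\<leftarrow>r. 0)"
      by (intro arg_cong[where f=sum_list] map_cong refl) (auto dest: zr)
    then show ?thesis using s1 True by simp
  next
    case False
    then have b: "0 < bloch_norm g" using bn by simp
    define h where "h = (\<lambda>w. g w / complex_of_real (bloch_norm g))"
    have hb: "h \<in> bloch_ball" and hd: "\<And>z. z \<in> disc \<Longrightarrow> deriv h z = deriv g z / complex_of_real (bloch_norm g)"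
      using scaled_bloch[OF g b] unfolding h_def by auto
    define f1 where "f1 = (\<lambda>y::complex \<times> complex \<times> 'a. case y of (l, z, x) \<Rightarrow> cmod l * cmod (deriv h z))"
    define f2 where "f2 = (\<lambda>y::complex \<times> complex \<times> 'a. case y of (l, z, x) \<Rightarrow> norm x)"
    have "(\<Sum>(l, z, x)\<leftarrow>r. (cmod l * cmod (deriv g z)) * (dnorm xs * norm x)) = (\<Sum>y\<leftarrow>r. (bloch_norm g * dnorm xs) * (f1 y * f2 y))"
    proof (intro arg_cong[where f=sum_list] map_cong refl)
      fix y assume "y \<in> set r"
      moreover obtain l z x where y0: "y = (l, z, x)" by (cases y) auto
      ultimately have y: "y = (l, z, x)" "z \<in> disc" using zr by auto
      show "(case y of (l, z, x) \<Rightarrow> (cmod l * cmod (deriv g z)) * (dnorm xs * norm x)) = (bloch_norm g * dnorm xs) * (f1 y * f2 y)"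
        using hd[OF y(2)] b by (simp add: y f1_def f2_def norm_divide)
    qed
    also have "\<dots> = (bloch_norm g * dnorm xs) * (\<Sum>y\<leftarrow>r. f1 y * f2 y)"
      by (simp add: sum_list_const_mult)
    also have "\<dots> \<le> (bloch_norm g * dnorm xs) * (lp_norm (conj_idx p) (map f1 r) * lp_norm p (map f2 r))"
      using holder[OF p, of r f1 f2] bn dnorm_nonneg[OF xs]
      by (intro mult_left_mono) (auto simp add: f1_def f2_def split: prod.splits)
    also have "\<dots> \<le> (bloch_norm g * dnorm xs) * (Aq p r * Bq p r)"
    proof -
      have "lp_norm (conj_idx p) (map f1 r) \<le> Aq p r"
        using A_ge[OF p r hb] by (simp add: f1_def)
      moreover have "lp_norm p (map f2 r) = Bq p r" by (simp add: Bq_def f2_def)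
      ultimately have "lp_norm (conj_idx p) (map f1 r) * lp_norm p (map f2 r) \<le> Aq p r * Bq p r"
        using B_nonneg[of p r] by (simp add: mult_right_mono)
      then show ?thesis using bn dnorm_nonneg[OF xs] by (intro mult_left_mono) auto
    qed
    finally show ?thesis using s1 by (simp add: mult.assoc)
  qed
qed

lemma crossnorm_bound:
  assumes p: "1 \<le> p" and g: "g \<in> bloch" and xs: "xs \<in> cdual" and r: "valid_rep r"
  shows "cmod (\<Sum>(l, z, x)\<leftarrow>r. l * deriv g z * xs x) \<le> bloch_norm g * dnorm xs * d_bloch p (tens r)"
proof -
  define c where "c = bloch_norm g * dnorm xs"
  have c0: "0 \<le> c" unfolding c_def using bloch_norm_nonneg[OF g] dnorm_nonneg[OF xs] by simp
  have key: "cmod (\<Sum>(l, z, x)\<leftarrow>r. l * deriv g z * xs x) \<le> c * (Aq p r' * Bq p r')"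
    if r': "valid_rep r'" "tens r' = tens r" for r'
  proof -
    have "(\<Sum>(l, z, x)\<leftarrow>r. l * deriv g z * xs x) = (\<Sum>(l, z, x)\<leftarrow>r'. l * deriv g z * xs x)"
      using tens_eval[OF g xs r] tens_eval[OF g xs r'(1)] r'(2) by simp
    then show ?thesis using basic_bound[OF p g xs r'(1)] by (simp add: c_def)
  qed
  show ?thesis
  proof (cases "c = 0")
    case True
    then have "cmod (\<Sum>(l, z, x)\<leftarrow>r. l * deriv g z * xs x) \<le> 0" using key[OF r refl] by simp
    then show ?thesis using True by (simp add: c_def[symmetric])
  next
    case False
    then have cp: "0 < c" using c0 by simp
    have "cmod (\<Sum>(l, z, x)\<leftarrow>r. l * deriv g z * xs x) / c \<le> d_bloch p (tens r)"
    proof (rule d_ge[OF p r refl])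
      fix r' assume "valid_rep r'" "tens r' = tens r"
      then show "cmod (\<Sum>(l, z, x)\<leftarrow>r. l * deriv g z * xs x) / c \<le> Aq p r' * Bq p r'"
        using key cp by (simp add: divide_le_eq mult.commute)
    qed
    then show ?thesis using cp by (simp add: c_def[symmetric] divide_le_eq mult.commute)
  qed
qed

section \<open>Algebra of representations\<close>

lemma tens_Nil: "tens [] = (\<lambda>F. 0)"
  by (simp add: tens_def fun_eq_iff)

lemma tens_append: "tens (r @ s) = (\<lambda>F. tens r F + tens s F)"
  by (simp add: tens_def fun_eq_iff)

lemma valid_append: "valid_rep (r @ s) \<longleftrightarrow> valid_rep r \<and> valid_rep s"
  unfolding valid_rep_def by (simp add: ball_Un)

definition cm :: "complex \<Rightarrow> (complex \<times> complex \<times> 'a) list \<Rightarrow> (complex \<times> complex \<times> 'a) list" where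
  "cm c r = map (\<lambda>(l, z, x). (c * l, z, x)) r"

definition rs :: "real \<Rightarrow> (complex \<times> complex \<times> 'a::complex_banach) list \<Rightarrow> (complex \<times> complex \<times> 'a) list" where
  "rs t r = map (\<lambda>(l, z, x). (complex_of_real t * l, z, scaleC (complex_of_real (1 / t)) x)) r"

lemma valid_cm: "valid_rep (cm c r) = valid_rep r"
  by (auto simp add: valid_rep_def cm_def)

lemma valid_rs: "valid_rep (rs t r) = valid_rep r"
  by (auto simp add: valid_rep_def rs_def)

lemma tens_cm: "tens (cm c r) = (\<lambda>F. c * tens r F)"
proof
  fix F :: "complex \<Rightarrow> 'a \<Rightarrow> complex"
  have "(\<Sum>(l, z, x)\<leftarrow>cm c r. l * dual_deriv F z x) = (\<Sum>y\<leftarrow>r. c * (case y of (l, z, x) \<Rightarrow> l * dual_deriv F z x))"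
    unfolding cm_def by (simp add: o_def case_prod_beta mult.assoc)
  then show "tens (cm c r) F = c * tens r F"
    by (simp add: tens_def sum_list_const_mult)
qed

lemma tens_rs:
  assumes r: "valid_rep r" and t: "t \<noteq> 0"
  shows "tens (rs t r) = tens r"
proof
  fix F :: "complex \<Rightarrow> 'a \<Rightarrow> complex"
  show "tens (rs t r) F = tens r F"
  proof (cases "F \<in> bloch_dual")
    case True
    define u where "u = (\<lambda>y::complex \<times> complex \<times> 'a. case y of (l, z, x) \<Rightarrow> l * dual_deriv F z x)"
    define v where "v = (\<lambda>y::complex \<times> complex \<times> 'a. case y of (l, z, x) \<Rightarrow> (complex_of_real t * l, z, scaleC (complex_of_real (1 / t)) x))"
    have "(\<Sum>(l, z, x)\<leftarrow>rs t r. l * dual_deriv F z x) = (\<Sum>y\<leftarrow>r. u (v y))"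
      unfolding rs_def u_def[symmetric] v_def[symmetric] by (simp only: map_map o_def)
    also have "\<dots> = (\<Sum>y\<leftarrow>r. u y)"
    proof (intro arg_cong[where f=sum_list] map_cong refl)
      fix y assume y: "y \<in> set r"
      obtain l z x where yy: "y = (l, z, x)" by (cases y) auto
      have "z \<in> disc" using r y yy by (auto simp add: valid_rep_def)
      then have "dual_deriv F z \<in> cdual" using True by (rule dual_deriv_cdual[rotated])
      then have "dual_deriv F z (scaleC (complex_of_real (1 / t)) x) = complex_of_real (1 / t) * dual_deriv F z x"
        by (rule cdual_scaleC)
      then show "u (v y) = u y"
        using t by (simp add: yy u_def v_def field_simps)
    qed
    finally have "(\<Sum>(l, z, x)\<leftarrow>rs t r. l * dual_deriv F z x) = (\<Sum>(l, z, x)\<leftarrow>r. l * dual_deriv F z x)"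
      by (simp add: u_def)
    then show ?thesis by (simp add: tens_def)
  qed (simp add: tens_def)
qed

lemma lp_mono2:
  assumes "1 \<le> q" "0 \<le> a" "a \<le> a'" "0 \<le> b" "b \<le> b'"
  shows "lp_norm q [a, b] \<le> lp_norm q [a', b']"
proof -
  have h: "\<And>i. i \<in> set [(a, a'), (b, b')] \<Longrightarrow> \<bar>fst i\<bar> \<le> \<bar>snd i\<bar>" using assms by auto
  show ?thesis using lp_mono[OF assms(1), of "[(a, a'), (b, b')]" fst snd, OF h] by simp
qed

lemma A_le:
  assumes p: "1 \<le> p" and r: "valid_rep r" and t: "0 \<le> t"
    and h: "\<And>g. g \<in> bloch_ball \<Longrightarrow> lp_norm (conj_idx p) (map (\<lambda>(l, z, x). cmod l * cmod (deriv g z)) r')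
                 \<le> t * lp_norm (conj_idx p) (map (\<lambda>(l, z, x). cmod l * cmod (deriv g z)) r)"
  shows "Aq p r' \<le> t * Aq p r"
  unfolding Aq_def[of p r']
proof (rule cSUP_least)
  show "bloch_ball \<noteq> {}" using zero_ball by blast
  fix g assume g: "g \<in> bloch_ball"
  show "lp_norm (conj_idx p) (map (\<lambda>(l, z, x). cmod l * cmod (deriv g z)) r') \<le> t * Aq p r"
    using h[OF g] A_ge[OF p r g] t by (meson mult_left_mono order_trans)
qed

lemma A_cm:
  assumes p: "1 \<le> p" and r: "valid_rep r"
  shows "Aq p (cm c r) \<le> cmod c * Aq p r"
proof (rule A_le[OF p r])
  fix g assume g: "g \<in> bloch_ball"
  have "map (\<lambda>(l, z, x). cmod l * cmod (deriv g z)) (cm c r) = map (\<lambda>y. cmod c * (case y of (l, z, x) \<Rightarrow> cmod l * cmod (deriv g z))) r"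
    by (simp add: cm_def case_prod_beta norm_mult mult.assoc)
  then show "lp_norm (conj_idx p) (map (\<lambda>(l, z, x). cmod l * cmod (deriv g z)) (cm c r))
          \<le> cmod c * lp_norm (conj_idx p) (map (\<lambda>(l, z, x). cmod l * cmod (deriv g z)) r)"
    using lp_hom[OF conj_ge1[OF p], of "cmod c" "\<lambda>y. case y of (l, z, x) \<Rightarrow> cmod l * cmod (deriv g z)" r] by simp
qed simp

lemma B_cm: "Bq p (cm c r) = Bq p r"
proof -
  have "map (\<lambda>(l, z, x). norm x) (cm c r) = map (\<lambda>(l, z, x). norm x) r"
    unfolding cm_def by (induction r) auto
  then show ?thesis by (simp add: Bq_def)
qed

lemma A_rs:
  assumes p: "1 \<le> p" and r: "valid_rep r" and t: "0 < t"
  shows "Aq p (rs t r) \<le> t * Aq p r"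
proof (rule A_le[OF p r])
  fix g assume g: "g \<in> bloch_ball"
  have "map (\<lambda>(l, z, x). cmod l * cmod (deriv g z)) (rs t r) = map (\<lambda>y. t * (case y of (l, z, x) \<Rightarrow> cmod l * cmod (deriv g z))) r"
    using t by (simp add: rs_def case_prod_beta norm_mult mult.assoc)
  then show "lp_norm (conj_idx p) (map (\<lambda>(l, z, x). cmod l * cmod (deriv g z)) (rs t r))
          \<le> t * lp_norm (conj_idx p) (map (\<lambda>(l, z, x). cmod l * cmod (deriv g z)) r)"
    using lp_hom[OF conj_ge1[OF p], of t "\<lambda>y. case y of (l, z, x) \<Rightarrow> cmod l * cmod (deriv g z)" r] t by simp
qed (use t in simp)

lemma B_rs:
  assumes p: "1 \<le> p" and t: "0 < t"
  shows "Bq p (rs t r) = Bq p r / t"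
proof -
  have "map (\<lambda>(l, z, x). norm x) (rs t r) = map (\<lambda>y. (1 / t) * (case y of (l, z, x) \<Rightarrow> norm x)) r"
    using t unfolding rs_def by (induction r) (auto simp add: norm_scaleC norm_divide)
  then show ?thesis using lp_hom[OF p, of "1 / t" "\<lambda>y. case y of (l, z, x) \<Rightarrow> norm x" r] t by (simp add: Bq_def)
qed

lemma A_append:
  assumes p: "1 \<le> p" and r: "valid_rep r" and s: "valid_rep s"
  shows "Aq p (r @ s) \<le> lp_norm (conj_idx p) [Aq p r, Aq p s]"
  unfolding Aq_def[of p "r @ s"]
proof (rule cSUP_least)
  show "bloch_ball \<noteq> {}" using zero_ball by blast
  fix g assume g: "g \<in> bloch_ball"
  have "lp_norm (conj_idx p) (map (\<lambda>(l, z, x). cmod l * cmod (deriv g z)) (r @ s))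
     = lp_norm (conj_idx p) [lp_norm (conj_idx p) (map (\<lambda>(l, z, x). cmod l * cmod (deriv g z)) r),
                             lp_norm (conj_idx p) (map (\<lambda>(l, z, x). cmod l * cmod (deriv g z)) s)]"
    using lp_append[OF conj_ge1[OF p]] by simp
  also have "\<dots> \<le> lp_norm (conj_idx p) [Aq p r, Aq p s]"
    by (rule lp_mono2[OF conj_ge1[OF p] lp_nonneg A_ge[OF p r g] lp_nonneg A_ge[OF p s g]])
  finally show "lp_norm (conj_idx p) (map (\<lambda>(l, z, x). cmod l * cmod (deriv g z)) (r @ s)) \<le> lp_norm (conj_idx p) [Aq p r, Aq p s]" .
qed

lemma B_append:
  assumes p: "1 \<le> p"
  shows "Bq p (r @ s) = lp_norm p [Bq p r, Bq p s]"
  using lp_append[OF p] by (simp add: Bq_def)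

section \<open>Interpolation of derivatives\<close>

lemma poly_prim:
  fixes q :: "complex poly"
  defines "g \<equiv> (\<lambda>z. \<Sum>i\<le>degree q. (coeff q i / of_nat (Suc i)) * z ^ Suc i)"
  shows "g \<in> bloch" "\<And>z. deriv g z = poly q z"
proof -
  have d: "(g has_field_derivative poly q z) (at z)" for z
  proof -
    have "((\<lambda>z. (coeff q i / of_nat (Suc i)) * z ^ Suc i) has_field_derivative coeff q i * z ^ i) (at z)" for i
    proof -
      have "((\<lambda>z. (coeff q i / of_nat (Suc i)) * z ^ Suc i) has_field_derivative
              (coeff q i / of_nat (Suc i)) * (of_nat (Suc i) * (1 * z ^ (Suc i - Suc 0)))) (at z)"
        by (intro DERIV_cmult DERIV_power DERIV_ident)
      moreover have "(coeff q i / of_nat (Suc i)) * (of_nat (Suc i) * (1 * z ^ (Suc i - Suc 0))) = coeff q i * z ^ i"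
        by (simp del: of_nat_Suc)
      ultimately show ?thesis by simp
    qed
    then have "(g has_field_derivative (\<Sum>i\<le>degree q. coeff q i * z ^ i)) (at z)"
      unfolding g_def by (intro DERIV_sum) auto
    then show ?thesis by (simp add: poly_altdef)
  qed
  show dd: "deriv g z = poly q z" for z by (rule DERIV_imp_deriv[OF d])
  have hol: "g holomorphic_on disc"
    unfolding holomorphic_on_def field_differentiable_def
    using d has_field_derivative_at_within by blast
  have g0: "g 0 = 0" by (simp add: g_def)
  have "(1 - (cmod z)\<^sup>2) * cmod (deriv g z) \<le> (\<Sum>i\<le>degree q. cmod (coeff q i))" if z: "z \<in> disc" for z
  proof -
    have "cmod (poly q z) \<le> (\<Sum>i\<le>degree q. cmod (coeff q i * z ^ i))"
      unfolding poly_altdef by (rule norm_sum)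
    also have "\<dots> \<le> (\<Sum>i\<le>degree q. cmod (coeff q i))"
    proof (rule sum_mono)
      fix i
      have "cmod z ^ i \<le> 1" using z by (simp add: power_le_one)
      then show "cmod (coeff q i * z ^ i) \<le> cmod (coeff q i)"
        by (simp add: norm_mult norm_power mult_left_le)
    qed
    finally have a: "cmod (deriv g z) \<le> (\<Sum>i\<le>degree q. cmod (coeff q i))" by (simp add: dd)
    have "(1 - (cmod z)\<^sup>2) * cmod (deriv g z) \<le> 1 * cmod (deriv g z)"
      using disc_pos[OF z] by (intro mult_right_mono) auto
    then show ?thesis using a by simp
  qed
  then have "bdd_above ((\<lambda>z. (1 - (cmod z)\<^sup>2) * cmod (deriv g z)) ` disc)"
    by (intro bdd_aboveI2) auto
  then show "g \<in> bloch" using hol g0 by (simp add: bloch_def)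
qed

lemma interp:
  assumes W: "finite W" and w0: "w0 \<in> W"
  shows "\<exists>g\<in>bloch. deriv g w0 = 1 \<and> (\<forall>w\<in>W. w \<noteq> w0 \<longrightarrow> deriv g w = 0)"
proof -
  define c where "c = 1 / (\<Prod>w\<in>W - {w0}. (w0 - w))"
  define q where "q = smult c (\<Prod>w\<in>W - {w0}. [:- w, 1:])"
  have pq: "poly q z = c * (\<Prod>w\<in>W - {w0}. (z - w))" for z
    by (simp add: q_def poly_prod)
  have nz: "(\<Prod>w\<in>W - {w0}. (w0 - w)) \<noteq> 0" using W by auto
  define g where "g = (\<lambda>z. \<Sum>i\<le>degree q. (coeff q i / of_nat (Suc i)) * z ^ Suc i)"
  have "g \<in> bloch" and dg: "\<And>z. deriv g z = poly q z" unfolding g_def by (rule poly_prim)+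
  moreover have "deriv g w0 = 1" using nz by (simp add: dg pq c_def)
  moreover have "deriv g w = 0" if "w \<in> W" "w \<noteq> w0" for w
  proof -
    have "(\<Prod>v\<in>W - {w0}. (w - v)) = 0" using W that by (simp add: prod_zero_iff)
    then show ?thesis by (simp add: dg pq)
  qed
  ultimately show ?thesis by blast
qed

section \<open>Norm properties\<close>

lemma sum_list_sum_swap: "(\<Sum>y\<leftarrow>r. \<Sum>w\<in>W. f w y) = (\<Sum>w\<in>W. \<Sum>y\<leftarrow>r. f w y)"
  by (induction r) (simp_all add: sum.distrib)

lemma definite:
  fixes r :: "(complex \<times> complex \<times> 'a::complex_banach) list"
  assumes p: "1 \<le> p" and r: "valid_rep r" and d0: "d_bloch p (tens r) = 0"
  shows "tens r = (\<lambda>F. 0)"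
proof
  fix F :: "complex \<Rightarrow> 'a \<Rightarrow> complex"
  show "tens r F = 0"
  proof (cases "F \<in> bloch_dual")
    case False then show ?thesis by (simp add: tens_def)
  next
    case True
    define H where "H = dual_deriv F"
    define W where "W = (\<lambda>y. fst (snd y)) ` set r"
    have Wf: "finite W" by (simp add: W_def)
    have Wd: "W \<subseteq> disc" using r by (auto simp add: W_def valid_rep_def)
    have inW: "z \<in> W" if "(l, z, x) \<in> set r" for l z x
      using that unfolding W_def by (metis fst_conv snd_conv image_eqI)
    define E where "E w = (\<Sum>y\<leftarrow>r. (case y of (l, z, x) \<Rightarrow> if z = w then l * H z x else 0))" for w
    have E0: "E w0 = 0" if w0: "w0 \<in> W" for w0
    proof -
      obtain g where g: "g \<in> bloch" "deriv g w0 = 1" "\<forall>w\<in>W. w \<noteq> w0 \<longrightarrow> deriv g w = 0"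
        using interp[OF Wf w0] by blast
      have xs: "H w0 \<in> cdual" using dual_deriv_cdual[OF True] Wd w0 by (auto simp add: H_def)
      have "cmod (\<Sum>(l, z, x)\<leftarrow>r. l * deriv g z * H w0 x) \<le> bloch_norm g * dnorm (H w0) * d_bloch p (tens r)"
        by (rule crossnorm_bound[OF p g(1) xs r])
      then have "(\<Sum>(l, z, x)\<leftarrow>r. l * deriv g z * H w0 x) = 0" using d0 by simp
      moreover have "(\<Sum>(l, z, x)\<leftarrow>r. l * deriv g z * H w0 x) = E w0"
        unfolding E_def
      proof (intro arg_cong[where f=sum_list] map_cong refl)
        fix y assume y: "y \<in> set r"
        obtain l z x where yy: "y = (l, z, x)" by (cases y) auto
        have "z \<in> W" using y yy inW by simp
        then show "(case y of (l, z, x) \<Rightarrow> l * deriv g z * H w0 x) = (case y of (l, z, x) \<Rightarrow> if z = w0 then l * H z x else 0)"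
          using g by (auto simp add: yy)
      qed
      ultimately show ?thesis by simp
    qed
    have "tens r F = (\<Sum>y\<leftarrow>r. case y of (l, z, x) \<Rightarrow> l * H z x)" using True by (simp add: tens_def H_def)
    also have "\<dots> = (\<Sum>y\<leftarrow>r. \<Sum>w\<in>W. case y of (l, z, x) \<Rightarrow> if z = w then l * H z x else 0)"
    proof (intro arg_cong[where f=sum_list] map_cong refl)
      fix y assume y: "y \<in> set r"
      obtain l z x where yy: "y = (l, z, x)" by (cases y) auto
      have "z \<in> W" using y yy inW by simp
      then show "(case y of (l, z, x) \<Rightarrow> l * H z x) = (\<Sum>w\<in>W. case y of (l, z, x) \<Rightarrow> if z = w then l * H z x else 0)"
        using Wf by (simp add: yy sum.delta sum.delta')
    qed
    also have "\<dots> = (\<Sum>w\<in>W. E w)" unfolding E_def by (rule sum_list_sum_swap)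
    also have "\<dots> = 0" using E0 by simp
    finally show ?thesis .
  qed
qed

lemma d_scale_le:
  assumes p: "1 \<le> p" and r0: "valid_rep r0" "tens r0 = \<gamma>" and k: "0 \<le> k"
    and h: "\<And>r. valid_rep r \<Longrightarrow> tens r = \<gamma> \<Longrightarrow> \<exists>r'. valid_rep r' \<and> tens r' = \<gamma>' \<and> Aq p r' * Bq p r' \<le> k * (Aq p r * Bq p r)"
  shows "d_bloch p \<gamma>' \<le> k * d_bloch p \<gamma>"
proof (cases "k = 0")
  case True
  obtain r' where r': "valid_rep r'" "tens r' = \<gamma>'" "Aq p r' * Bq p r' \<le> k * (Aq p r0 * Bq p r0)"
    using h[OF r0] by blast
  have "d_bloch p \<gamma>' \<le> Aq p r' * Bq p r'" using d_le[OF p r'(1)] r'(2) by simp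
  then show ?thesis using r'(3) True by simp
next
  case False
  then have kp: "0 < k" using k by simp
  have "d_bloch p \<gamma>' / k \<le> d_bloch p \<gamma>"
  proof (rule d_ge[OF p r0])
    fix r assume "valid_rep r" "tens r = \<gamma>"
    then obtain r' where r': "valid_rep r'" "tens r' = \<gamma>'" "Aq p r' * Bq p r' \<le> k * (Aq p r * Bq p r)"
      using h by blast
    have "d_bloch p \<gamma>' \<le> Aq p r' * Bq p r'" using d_le[OF p r'(1)] r'(2) by simp
    then have "d_bloch p \<gamma>' \<le> k * (Aq p r * Bq p r)" using r'(3) by simp
    then show "d_bloch p \<gamma>' / k \<le> Aq p r * Bq p r" using kp by (simp add: divide_le_eq mult.commute)
  qed
  then show ?thesis using kp by (simp add: divide_le_eq mult.commute)
qed

lemma homog: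
  fixes r0 :: "(complex \<times> complex \<times> 'a::complex_banach) list"
  assumes p: "1 \<le> p" and r0: "valid_rep r0"
  shows "d_bloch p (\<lambda>F. c * tens r0 F) = cmod c * d_bloch p (tens r0)"
proof -
  have up: "d_bloch p (\<lambda>F. c' * tens r1 F) \<le> cmod c' * d_bloch p (tens r1)" if r1: "valid_rep r1" for c' and r1 :: "(complex \<times> complex \<times> 'a) list"
  proof (rule d_scale_le[OF p r1 refl])
    fix r assume r: "valid_rep r" "tens r = tens r1"
    have "Aq p (cm c' r) * Bq p (cm c' r) \<le> (cmod c' * Aq p r) * Bq p r"
      using A_cm[OF p r(1)] B_nonneg[of p r] by (simp add: B_cm mult_right_mono)
    then show "\<exists>r'. valid_rep r' \<and> tens r' = (\<lambda>F. c' * tens r1 F) \<and> Aq p r' * Bq p r' \<le> cmod c' * (Aq p r * Bq p r)"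
      using r by (intro exI[of _ "cm c' r"]) (simp add: valid_cm tens_cm mult.assoc)
  qed simp
  show ?thesis
  proof (cases "c = 0")
    case True
    have "0 \<le> d_bloch p (tens (cm c r0))" by (rule d_nonneg[OF p]) (simp add: valid_cm r0)
    then show ?thesis using up[OF r0, of c] True by (simp add: tens_cm)
  next
    case False
    have "d_bloch p (\<lambda>F. (1 / c) * tens (cm c r0) F) \<le> cmod (1 / c) * d_bloch p (tens (cm c r0))"
      by (rule up) (simp add: valid_cm r0)
    moreover have "(\<lambda>F. (1 / c) * tens (cm c r0) F) = tens r0" using False by (simp add: tens_cm)
    ultimately have "d_bloch p (tens r0) \<le> d_bloch p (\<lambda>F. c * tens r0 F) / cmod c"
      by (simp add: tens_cm norm_divide)
    then have "cmod c * d_bloch p (tens r0) \<le> d_bloch p (\<lambda>F. c * tens r0 F)"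
      using False by (simp add: le_divide_eq mult.commute)
    then show ?thesis using up[OF r0, of c] by simp
  qed
qed

lemma wexp_nonneg: "1 \<le> q \<Longrightarrow> 0 \<le> wexp q"
  by (cases q) (auto simp add: wexp_def)

lemma normalize:
  fixes a b D \<alpha> \<beta> :: real
  assumes a: "0 \<le> a" and b: "0 \<le> b" and D: "a * b < D" and ab: "\<alpha> + \<beta> = 1"
  shows "\<exists>t>0. t * a \<le> D powr \<alpha> \<and> b / t \<le> D powr \<beta>"
proof -
  have Dp: "0 < D" using a b D by (meson mult_nonneg_nonneg order_le_less_trans)
  show ?thesis
  proof (cases "a > 0")
    case True
    define t where "t = D powr \<alpha> / a"
    have tp: "0 < t" using True Dp by (simp add: t_def)
    have "b / t = (a * b) / D powr \<alpha>" using True by (simp add: t_def)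
    also have "\<dots> \<le> D / D powr \<alpha>" using D Dp by (intro divide_right_mono) auto
    also have "\<dots> = D powr \<beta>"
    proof -
      have "\<beta> = 1 - \<alpha>" using ab by simp
      then have "D powr \<beta> = D powr 1 / D powr \<alpha>" by (simp add: powr_diff)
      then show ?thesis using Dp by simp
    qed
    finally show ?thesis using tp True by (intro exI[of _ t]) (simp add: t_def)
  next
    case False
    then have a0: "a = 0" using a by simp
    show ?thesis
    proof (cases "b > 0")
      case True
      define t where "t = b / D powr \<beta>"
      have tp: "0 < t" using True Dp by (simp add: t_def)
      show ?thesis using tp True a0 Dp by (intro exI[of _ t]) (simp add: t_def)
    next
      case False
      then show ?thesis using a0 b by (intro exI[of _ 1]) simp
    qed
  qed
qed

lemma tri_core:
  fixes r s :: "(complex \<times> complex \<times> 'a::complex_banach) list"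
  assumes p: "1 \<le> p" and r: "valid_rep r" and s: "valid_rep s"
    and D1: "Aq p r * Bq p r < D1" and D2: "Aq p s * Bq p s < D2"
  shows "d_bloch p (tens (r @ s)) \<le> D1 + D2"
proof -
  define \<alpha> where "\<alpha> = wexp (conj_idx p)"
  define \<beta> where "\<beta> = wexp p"
  have ab: "\<alpha> + \<beta> = 1" using wexp_sum[OF p] by (simp add: \<alpha>_def \<beta>_def)
  have q: "1 \<le> conj_idx p" by (rule conj_ge1[OF p])
  have D1p: "0 < D1" using D1 val_nonneg[OF p r] by simp
  have D2p: "0 < D2" using D2 val_nonneg[OF p s] by simp
  obtain t1 where t1: "0 < t1" "t1 * Aq p r \<le> D1 powr \<alpha>" "Bq p r / t1 \<le> D1 powr \<beta>"
    using normalize[OF A_nonneg[OF p r] B_nonneg D1 ab] by blast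
  obtain t2 where t2: "0 < t2" "t2 * Aq p s \<le> D2 powr \<alpha>" "Bq p s / t2 \<le> D2 powr \<beta>"
    using normalize[OF A_nonneg[OF p s] B_nonneg D2 ab] by blast
  define r' where "r' = rs t1 r"
  define s' where "s' = rs t2 s"
  have vr': "valid_rep r'" and vs': "valid_rep s'" using r s by (simp_all add: r'_def s'_def valid_rs)
  have te: "tens (r' @ s') = tens (r @ s)"
    using tens_rs[OF r, of t1] tens_rs[OF s, of t2] t1(1) t2(1) by (simp add: r'_def s'_def tens_append)
  have Ar: "Aq p r' \<le> D1 powr \<alpha>" using A_rs[OF p r t1(1)] t1(2) by (simp add: r'_def)
  have As: "Aq p s' \<le> D2 powr \<alpha>" using A_rs[OF p s t2(1)] t2(2) by (simp add: s'_def)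
  have Br: "Bq p r' \<le> D1 powr \<beta>" using B_rs[OF p t1(1), of r] t1(3) by (simp add: r'_def)
  have Bs: "Bq p s' \<le> D2 powr \<beta>" using B_rs[OF p t2(1), of s] t2(3) by (simp add: s'_def)
  have A: "Aq p (r' @ s') \<le> (D1 + D2) powr \<alpha>"
  proof -
    have "Aq p (r' @ s') \<le> lp_norm (conj_idx p) [Aq p r', Aq p s']" by (rule A_append[OF p vr' vs'])
    also have "\<dots> \<le> lp_norm (conj_idx p) [D1 powr \<alpha>, D2 powr \<alpha>]"
      by (rule lp_mono2[OF q A_nonneg[OF p vr'] Ar A_nonneg[OF p vs'] As])
    also have "\<dots> = (D1 + D2) powr \<alpha>" unfolding \<alpha>_def by (rule lp_two_pow[OF q D1p D2p])
    finally show ?thesis .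
  qed
  have B: "Bq p (r' @ s') \<le> (D1 + D2) powr \<beta>"
  proof -
    have "Bq p (r' @ s') = lp_norm p [Bq p r', Bq p s']" by (rule B_append[OF p])
    also have "\<dots> \<le> lp_norm p [D1 powr \<beta>, D2 powr \<beta>]"
      by (rule lp_mono2[OF p B_nonneg Br B_nonneg Bs])
    also have "\<dots> = (D1 + D2) powr \<beta>" unfolding \<beta>_def by (rule lp_two_pow[OF p D1p D2p])
    finally show ?thesis .
  qed
  have "d_bloch p (tens (r @ s)) \<le> Aq p (r' @ s') * Bq p (r' @ s')"
    using d_le[OF p, of "r' @ s'"] vr' vs' te by (simp add: valid_append)
  also have "\<dots> \<le> (D1 + D2) powr \<alpha> * (D1 + D2) powr \<beta>"
    using A B A_nonneg[OF p, of "r' @ s'"] B_nonneg vr' vs'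
    by (intro mult_mono) (auto simp add: valid_append)
  also have "\<dots> = D1 + D2" using ab D1p D2p by (simp add: powr_add[symmetric])
  finally show ?thesis .
qed

lemma triangle:
  fixes r0 s0 :: "(complex \<times> complex \<times> 'a::complex_banach) list"
  assumes p: "1 \<le> p" and r0: "valid_rep r0" and s0: "valid_rep s0"
  shows "d_bloch p (\<lambda>F. tens r0 F + tens s0 F) \<le> d_bloch p (tens r0) + d_bloch p (tens s0)"
proof -
  define X where "X = d_bloch p (\<lambda>F. tens r0 F + tens s0 F)"
  have step1: "X \<le> Aq p r * Bq p r + Aq p s * Bq p s"
    if r: "valid_rep r" "tens r = tens r0" and s: "valid_rep s" "tens s = tens s0" for r s
  proof (rule field_le_epsilon)
    fix e :: real assume e: "0 < e"
    have "d_bloch p (tens (r @ s)) \<le> (Aq p r * Bq p r + e / 2) + (Aq p s * Bq p s + e / 2)"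
      by (rule tri_core[OF p r(1) s(1)]) (use e in simp_all)
    then show "X \<le> Aq p r * Bq p r + Aq p s * Bq p s + e"
      using r s by (simp add: X_def tens_append)
  qed
  have step2: "X - Aq p s * Bq p s \<le> d_bloch p (tens r0)"
    if s: "valid_rep s" "tens s = tens s0" for s
  proof (rule d_ge[OF p r0 refl])
    fix r assume "valid_rep r" "tens r = tens r0"
    then show "X - Aq p s * Bq p s \<le> Aq p r * Bq p r" using step1 s by fastforce
  qed
  have "X - d_bloch p (tens r0) \<le> d_bloch p (tens s0)"
  proof (rule d_ge[OF p s0 refl])
    fix s assume "valid_rep s" "tens s = tens s0"
    then show "X - d_bloch p (tens r0) \<le> Aq p s * Bq p s" using step2 by fastforce
  qed
  then show ?thesis by (simp add: X_def)
qed

lemma lp_Nil: "lp_norm q [] = 0"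
  by (simp add: lp_norm_def)

lemma single_bound:
  fixes x :: "'a::complex_banach"
  assumes p: "1 \<le> p" and z: "z \<in> disc"
  shows "d_bloch p (tens [(1, z, x)]) \<le> gamma_norm z * norm x"
proof -
  have v: "valid_rep [(1, z, x)]" using z by (simp add: valid_rep_def)
  have "Aq p [(1, z, x)] = gamma_norm z"
    unfolding Aq_def gamma_norm_def using lp_single[OF conj_ge1[OF p]] by simp
  moreover have "Bq p [(1, z, x)] = norm x" unfolding Bq_def using lp_single[OF p] by simp
  ultimately show ?thesis using d_le[OF p v] by simp
qed

theorem theorem2p6:
  fixes p :: ereal
  assumes "1 \<le> p"
  shows "bloch_reasonable_crossnorm (d_bloch p :: ((complex \<Rightarrow> 'a::complex_banach \<Rightarrow> complex) \<Rightarrow> complex) \<Rightarrow> real)"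
proof -
  note p = assms
  have N: "is_norm_on tensor_space (d_bloch p :: ((complex \<Rightarrow> 'a \<Rightarrow> complex) \<Rightarrow> complex) \<Rightarrow> real)"
    unfolding is_norm_on_def
  proof (intro conjI ballI allI)
    fix \<gamma> :: "(complex \<Rightarrow> 'a \<Rightarrow> complex) \<Rightarrow> complex" assume "\<gamma> \<in> tensor_space"
    then obtain r where r: "valid_rep r" "\<gamma> = tens r" by (auto simp add: tensor_space_def)
    show "0 \<le> d_bloch p \<gamma>" using d_nonneg[OF p r(1)] r(2) by simp
    show "d_bloch p \<gamma> = 0 \<longleftrightarrow> \<gamma> = (\<lambda>F. 0)"
    proof
      assume "d_bloch p \<gamma> = 0"
      then show "\<gamma> = (\<lambda>F. 0)" using definite[OF p r(1)] r(2) by simp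
    next
      assume g0: "\<gamma> = (\<lambda>F. 0)"
      have v: "valid_rep ([] :: (complex \<times> complex \<times> 'a) list)" by (simp add: valid_rep_def)
      have "d_bloch p (tens ([] :: (complex \<times> complex \<times> 'a) list)) \<le> 0"
        using d_le[OF p v] by (simp add: Bq_def lp_Nil)
      moreover have "0 \<le> d_bloch p (tens ([] :: (complex \<times> complex \<times> 'a) list))" by (rule d_nonneg[OF p v])
      ultimately show "d_bloch p \<gamma> = 0" using g0 by (simp add: tens_Nil)
    qed
    fix c
    show "d_bloch p (\<lambda>F. c * \<gamma> F) = cmod c * d_bloch p \<gamma>" using homog[OF p r(1)] r(2) by simp
  next
    fix \<gamma> \<delta> :: "(complex \<Rightarrow> 'a \<Rightarrow> complex) \<Rightarrow> complex"
    assume "\<gamma> \<in> tensor_space" "\<delta> \<in> tensor_space"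
    then obtain r s where r: "valid_rep r" "\<gamma> = tens r" and s: "valid_rep s" "\<delta> = tens s"
      by (auto simp add: tensor_space_def)
    show "d_bloch p (\<lambda>F. \<gamma> F + \<delta> F) \<le> d_bloch p \<gamma> + d_bloch p \<delta>"
      using triangle[OF p r(1) s(1)] r(2) s(2) by simp
  qed
  show ?thesis unfolding bloch_reasonable_crossnorm_def
    using N single_bound[OF p] crossnorm_bound[OF p] by blast
qed

end
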